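(* Let $g,h,K$ be parameters and let $a,b,c,d$ be generators of an associative algebra over $\mathbb{C}$ (extended by the parameters) subject to the relations $$ca=ac-gc^2,\quad cb=bc-gdc-hac+ghc^2,\quad cd=dc-hc^2,\quad da=ad-gdc+hac,$$ $$db=bd+g(ad-bc+hac-d^2),\quad ba=ab-h(ad-bc+hac-a^2).$$ Let $T=\begin{pmatrix} a&b\\ c&d\end{pmatrix}$ and $$\hat R(K;g,h)=\begin{pmatrix}1&-hK&hK&ghK\\0&1-K&K&gK\\0&K&1-K&-gK\\0&0&0&1\end{pmatrix},\qquad R=P\hat R(K;g,h).$$ Then for every value of $K$, $$R\,T_1T_2=T_2T_1\,R .$$
   Context: All $4\times4$ matrices are written in the ordered basis $e_1\otimes e_1,\ e_1\otimes e_2,\ e_2\otimes e_1,\ e_2\otimes e_2$ of $\mathbb{C}^2\otimes\mathbb{C}^2$, with double indices $(ij)$ ordered $11,12,21,22$. $P$ is the permutation (flip) matrix, i.e. the $4\times4$ matrix that swaps the second and third basis vectors. $T_1=T\otimes I_2$ and $T_2=I_2\otimes T$, so $T_1T_2$ has entries $(T_1T_2)_{(ij),(kl)}=T_{ik}T_{jl}$ and $T_2T_1$ has entries $(T_2T_1)_{(ij),(kl)}=T_{jl}T_{ik}$ (the entries of $T$ do not commute, so the order of factors matters). The equality is an equality of $4\times 4$ matrices with entries in the algebra. *)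

theory Defs
  imports "Jordan_Normal_Form.Matrix"
begin

text \<open>Basis index n in {0..3} encodes the double index (i,j) in {1,2}x{1,2},
  ordered 11,12,21,22: first component n div 2, second n mod 2 (0-based).\<close>

definition Tmat :: "'a \<Rightarrow> 'a \<Rightarrow> 'a \<Rightarrow> 'a \<Rightarrow> nat \<Rightarrow> nat \<Rightarrow> 'a" where
  "Tmat a b c d i k = (if i = 0 then (if k = 0 then a else b) else (if k = 0 then c else d))"

text \<open>(T1 T2)_{(ij),(kl)} = T_ik T_jl\<close>
definition T1T2 :: "'a::ring_1 \<Rightarrow> 'a \<Rightarrow> 'a \<Rightarrow> 'a \<Rightarrow> 'a mat" where
  "T1T2 a b c d = mat 4 4 (\<lambda>(p,q).
     Tmat a b c d (p div 2) (q div 2) * Tmat a b c d (p mod 2) (q mod 2))"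

text \<open>(T2 T1)_{(ij),(kl)} = T_jl T_ik\<close>
definition T2T1 :: "'a::ring_1 \<Rightarrow> 'a \<Rightarrow> 'a \<Rightarrow> 'a \<Rightarrow> 'a mat" where
  "T2T1 a b c d = mat 4 4 (\<lambda>(p,q).
     Tmat a b c d (p mod 2) (q mod 2) * Tmat a b c d (p div 2) (q div 2))"

definition Pflip :: "'a::ring_1 mat" where
  "Pflip = mat_of_rows_list 4 [[1,0,0,0],[0,0,1,0],[0,1,0,0],[0,0,0,1]]"

definition Rhat :: "'a::ring_1 \<Rightarrow> 'a \<Rightarrow> 'a \<Rightarrow> 'a mat" where
  "Rhat K g h = mat_of_rows_list 4
     [[1, - (h*K), h*K, g*h*K],
      [0, 1 - K, K, g*K],
      [0, K, 1 - K, - (g*K)],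
      [0, 0, 0, 1]]"

definition Rmat :: "'a::ring_1 \<Rightarrow> 'a \<Rightarrow> 'a \<Rightarrow> 'a mat" where
  "Rmat K g h = Pflip * Rhat K g h"

end

theory Submission
  imports Defs
begin

lemma all4: "(\<forall>i<(4::nat). P i) = (P 0 \<and> P 1 \<and> P 2 \<and> P 3)"
  by (auto simp: less_Suc_eq numeral_eq_Suc)

lemma sum4: "(\<Sum>i<(4::nat). f i) = f 0 + f 1 + f 2 + f 3"
  by (simp add: numeral_eq_Suc add.assoc)

lemma Rmat_eq: "Rmat K g h = mat 4 4 (\<lambda>(i,j). [[1, - (h*K), h*K, g*h*K],[0, K, 1 - K, - (g*K)],[0, 1 - K, K, g*K],[0, 0, 0, 1]] ! i ! j)"
  apply (rule eq_matI)
  apply (simp_all add: Rmat_def Pflip_def Rhat_def mat_of_rows_list_def scalar_prod_def sum4)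
  apply (auto simp: less_Suc_eq numeral_eq_Suc)
  done

lemma prod_entry: "A \<in> carrier_mat 4 4 \<Longrightarrow> B \<in> carrier_mat 4 4 \<Longrightarrow> i < 4 \<Longrightarrow> j < 4 \<Longrightarrow>
  (A * B) $$ (i,j) = A$$(i,0)*B$$(0,j) + A$$(i,1)*B$$(1,j) + A$$(i,2)*B$$(2,j) + A$$(i,3)*B$$(3,j)"
  by (simp add: scalar_prod_def sum4 atLeast0LessThan)
theorem mainTheorem2:
  fixes a b c d g h K :: "'a::ring_1"
  assumes central: "\<And>x. g * x = x * g" "\<And>x. h * x = x * h" "\<And>x. K * x = x * K"
    and r1: "c*a = a*c - g*c^2"
    and r2: "c*b = b*c - g*d*c - h*a*c + g*h*c^2"
    and r3: "c*d = d*c - h*c^2"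
    and r4: "d*a = a*d - g*d*c + h*a*c"
    and r5: "d*b = b*d + g*(a*d - b*c + h*a*c - d^2)"
    and r6: "b*a = a*b - h*(a*d - b*c + h*a*c - a^2)"
  shows "Rmat K g h * T1T2 a b c d = T2T1 a b c d * Rmat K g h"
proof -
  have cg: "x * g = g * x" "x * (g * y) = g * (x * y)" for x y
    using central(1) by (metis mult.assoc)+
  have ch: "x * h = h * x" "x * (h * y) = h * (x * y)" for x y
    using central(2) by (metis mult.assoc)+
  have cK: "x * K = K * x" "x * (K * y) = K * (x * y)" for x y
    using central(3) by (metis mult.assoc)+
  have r1': "c*(a*y) = a*(c*y) - g*(c*(c*y))" for y
    using arg_cong[OF r1, of "\<lambda>z. z*y"] by (simp add: algebra_simps power2_eq_square)
  have r2': "c*(b*y) = b*(c*y) - g*(d*(c*y)) - h*(a*(c*y)) + g*(h*(c*(c*y)))" for y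
    using arg_cong[OF r2, of "\<lambda>z. z*y"] by (simp add: algebra_simps power2_eq_square)
  have r3': "c*(d*y) = d*(c*y) - h*(c*(c*y))" for y
    using arg_cong[OF r3, of "\<lambda>z. z*y"] by (simp add: algebra_simps power2_eq_square)
  have r4': "d*(a*y) = a*(d*y) - g*(d*(c*y)) + h*(a*(c*y))" for y
    using arg_cong[OF r4, of "\<lambda>z. z*y"] by (simp add: algebra_simps power2_eq_square)
  have r5': "d*(b*y) = b*(d*y) + g*(a*(d*y)) - g*(b*(c*y)) + g*(h*(a*(c*y))) - g*(d*(d*y))" for y
    using arg_cong[OF r5, of "\<lambda>z. z*y"] by (simp add: algebra_simps power2_eq_square)
  have r6': "b*(a*y) = a*(b*y) - h*(a*(d*y)) + h*(b*(c*y)) - h*(h*(a*(c*y))) + h*(a*(a*y))" for y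
    using arg_cong[OF r6, of "\<lambda>z. z*y"] by (simp add: algebra_simps power2_eq_square)
  have rr: "c*a = a*c - g*(c*c)" "c*b = b*c - g*(d*c) - h*(a*c) + g*(h*(c*c))"
    "c*d = d*c - h*(c*c)" "d*a = a*d - g*(d*c) + h*(a*c)"
    "d*b = b*d + g*(a*d) - g*(b*c) + g*(h*(a*c)) - g*(d*d)"
    "b*a = a*b - h*(a*d) + h*(b*c) - h*(h*(a*c)) + h*(a*a)"
    using r1 r2 r3 r4 r5 r6 by (simp_all add: algebra_simps power2_eq_square)
  note sK = cg(1)[of K] cg(2)[of K] ch(1)[of K] ch(2)[of K] cg(1)[of h] cg(2)[of h]
  have c4: "i < 4 \<Longrightarrow> i = 0 \<or> i = 1 \<or> i = 2 \<or> i = (3::nat)" for i by auto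
  have carr: "Rmat K g h \<in> carrier_mat 4 4" "T1T2 a b c d \<in> carrier_mat 4 4" "T2T1 a b c d \<in> carrier_mat 4 4"
    by (simp_all add: Rmat_eq T1T2_def T2T1_def)
  have e00: "(Rmat K g h * T1T2 a b c d) $$ (0,0) = (T2T1 a b c d * Rmat K g h) $$ (0,0)"
    apply (subst prod_entry[OF carr(1,2)], simp, simp)
    apply (subst prod_entry[OF carr(3,1)], simp, simp)
    apply (simp add: Rmat_eq T1T2_def T2T1_def Tmat_def)
    apply (simp add: algebra_simps rr r1' r2' r3' r4' r5' r6' cg[of a] cg[of b] cg[of c] cg[of d] ch[of a] ch[of b] ch[of c] ch[of d] cK[of a] cK[of b] cK[of c] cK[of d] sK)?
    done
  have e01: "(Rmat K g h * T1T2 a b c d) $$ (0,1) = (T2T1 a b c d * Rmat K g h) $$ (0,1)"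
    apply (subst prod_entry[OF carr(1,2)], simp, simp)
    apply (subst prod_entry[OF carr(3,1)], simp, simp)
    apply (simp add: Rmat_eq T1T2_def T2T1_def Tmat_def)
    apply (simp add: algebra_simps rr r1' r2' r3' r4' r5' r6' cg[of a] cg[of b] cg[of c] cg[of d] ch[of a] ch[of b] ch[of c] ch[of d] cK[of a] cK[of b] cK[of c] cK[of d] sK)?
    done
  have e02: "(Rmat K g h * T1T2 a b c d) $$ (0,2) = (T2T1 a b c d * Rmat K g h) $$ (0,2)"
    apply (subst prod_entry[OF carr(1,2)], simp, simp)
    apply (subst prod_entry[OF carr(3,1)], simp, simp)
    apply (simp add: Rmat_eq T1T2_def T2T1_def Tmat_def)
    apply (simp add: algebra_simps rr r1' r2' r3' r4' r5' r6' cg[of a] cg[of b] cg[of c] cg[of d] ch[of a] ch[of b] ch[of c] ch[of d] cK[of a] cK[of b] cK[of c] cK[of d] sK)?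
    done
  have e03: "(Rmat K g h * T1T2 a b c d) $$ (0,3) = (T2T1 a b c d * Rmat K g h) $$ (0,3)"
    apply (subst prod_entry[OF carr(1,2)], simp, simp)
    apply (subst prod_entry[OF carr(3,1)], simp, simp)
    apply (simp add: Rmat_eq T1T2_def T2T1_def Tmat_def)
    apply (simp add: algebra_simps rr r1' r2' r3' r4' r5' r6' cg[of a] cg[of b] cg[of c] cg[of d] ch[of a] ch[of b] ch[of c] ch[of d] cK[of a] cK[of b] cK[of c] cK[of d] sK)?
    done
  have e10: "(Rmat K g h * T1T2 a b c d) $$ (1,0) = (T2T1 a b c d * Rmat K g h) $$ (1,0)"
    apply (subst prod_entry[OF carr(1,2)], simp, simp)
    apply (subst prod_entry[OF carr(3,1)], simp, simp)
    apply (simp add: Rmat_eq T1T2_def T2T1_def Tmat_def)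
    apply (simp add: algebra_simps rr r1' r2' r3' r4' r5' r6' cg[of a] cg[of b] cg[of c] cg[of d] ch[of a] ch[of b] ch[of c] ch[of d] cK[of a] cK[of b] cK[of c] cK[of d] sK)?
    done
  have e11: "(Rmat K g h * T1T2 a b c d) $$ (1,1) = (T2T1 a b c d * Rmat K g h) $$ (1,1)"
    apply (subst prod_entry[OF carr(1,2)], simp, simp)
    apply (subst prod_entry[OF carr(3,1)], simp, simp)
    apply (simp add: Rmat_eq T1T2_def T2T1_def Tmat_def)
    apply (simp add: algebra_simps rr r1' r2' r3' r4' r5' r6' cg[of a] cg[of b] cg[of c] cg[of d] ch[of a] ch[of b] ch[of c] ch[of d] cK[of a] cK[of b] cK[of c] cK[of d] sK)?
    done
  have e12: "(Rmat K g h * T1T2 a b c d) $$ (1,2) = (T2T1 a b c d * Rmat K g h) $$ (1,2)"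
    apply (subst prod_entry[OF carr(1,2)], simp, simp)
    apply (subst prod_entry[OF carr(3,1)], simp, simp)
    apply (simp add: Rmat_eq T1T2_def T2T1_def Tmat_def)
    apply (simp add: algebra_simps rr r1' r2' r3' r4' r5' r6' cg[of a] cg[of b] cg[of c] cg[of d] ch[of a] ch[of b] ch[of c] ch[of d] cK[of a] cK[of b] cK[of c] cK[of d] sK)?
    done
  have e13: "(Rmat K g h * T1T2 a b c d) $$ (1,3) = (T2T1 a b c d * Rmat K g h) $$ (1,3)"
    apply (subst prod_entry[OF carr(1,2)], simp, simp)
    apply (subst prod_entry[OF carr(3,1)], simp, simp)
    apply (simp add: Rmat_eq T1T2_def T2T1_def Tmat_def)
    apply (simp add: algebra_simps rr r1' r2' r3' r4' r5' r6' cg[of a] cg[of b] cg[of c] cg[of d] ch[of a] ch[of b] ch[of c] ch[of d] cK[of a] cK[of b] cK[of c] cK[of d] sK)?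
    done
  have e20: "(Rmat K g h * T1T2 a b c d) $$ (2,0) = (T2T1 a b c d * Rmat K g h) $$ (2,0)"
    apply (subst prod_entry[OF carr(1,2)], simp, simp)
    apply (subst prod_entry[OF carr(3,1)], simp, simp)
    apply (simp add: Rmat_eq T1T2_def T2T1_def Tmat_def)
    apply (simp add: algebra_simps rr r1' r2' r3' r4' r5' r6' cg[of a] cg[of b] cg[of c] cg[of d] ch[of a] ch[of b] ch[of c] ch[of d] cK[of a] cK[of b] cK[of c] cK[of d] sK)?
    done
  have e21: "(Rmat K g h * T1T2 a b c d) $$ (2,1) = (T2T1 a b c d * Rmat K g h) $$ (2,1)"
    apply (subst prod_entry[OF carr(1,2)], simp, simp)
    apply (subst prod_entry[OF carr(3,1)], simp, simp)
    apply (simp add: Rmat_eq T1T2_def T2T1_def Tmat_def)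
    apply (simp add: algebra_simps rr r1' r2' r3' r4' r5' r6' cg[of a] cg[of b] cg[of c] cg[of d] ch[of a] ch[of b] ch[of c] ch[of d] cK[of a] cK[of b] cK[of c] cK[of d] sK)?
    done
  have e22: "(Rmat K g h * T1T2 a b c d) $$ (2,2) = (T2T1 a b c d * Rmat K g h) $$ (2,2)"
    apply (subst prod_entry[OF carr(1,2)], simp, simp)
    apply (subst prod_entry[OF carr(3,1)], simp, simp)
    apply (simp add: Rmat_eq T1T2_def T2T1_def Tmat_def)
    apply (simp add: algebra_simps rr r1' r2' r3' r4' r5' r6' cg[of a] cg[of b] cg[of c] cg[of d] ch[of a] ch[of b] ch[of c] ch[of d] cK[of a] cK[of b] cK[of c] cK[of d] sK)?
    done
  have e23: "(Rmat K g h * T1T2 a b c d) $$ (2,3) = (T2T1 a b c d * Rmat K g h) $$ (2,3)"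
    apply (subst prod_entry[OF carr(1,2)], simp, simp)
    apply (subst prod_entry[OF carr(3,1)], simp, simp)
    apply (simp add: Rmat_eq T1T2_def T2T1_def Tmat_def)
    apply (simp add: algebra_simps rr r1' r2' r3' r4' r5' r6' cg[of a] cg[of b] cg[of c] cg[of d] ch[of a] ch[of b] ch[of c] ch[of d] cK[of a] cK[of b] cK[of c] cK[of d] sK)?
    done
  have e30: "(Rmat K g h * T1T2 a b c d) $$ (3,0) = (T2T1 a b c d * Rmat K g h) $$ (3,0)"
    apply (subst prod_entry[OF carr(1,2)], simp, simp)
    apply (subst prod_entry[OF carr(3,1)], simp, simp)
    apply (simp add: Rmat_eq T1T2_def T2T1_def Tmat_def)
    apply (simp add: algebra_simps rr r1' r2' r3' r4' r5' r6' cg[of a] cg[of b] cg[of c] cg[of d] ch[of a] ch[of b] ch[of c] ch[of d] cK[of a] cK[of b] cK[of c] cK[of d] sK)?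
    done
  have e31: "(Rmat K g h * T1T2 a b c d) $$ (3,1) = (T2T1 a b c d * Rmat K g h) $$ (3,1)"
    apply (subst prod_entry[OF carr(1,2)], simp, simp)
    apply (subst prod_entry[OF carr(3,1)], simp, simp)
    apply (simp add: Rmat_eq T1T2_def T2T1_def Tmat_def)
    apply (simp add: algebra_simps rr r1' r2' r3' r4' r5' r6' cg[of a] cg[of b] cg[of c] cg[of d] ch[of a] ch[of b] ch[of c] ch[of d] cK[of a] cK[of b] cK[of c] cK[of d] sK)?
    done
  have e32: "(Rmat K g h * T1T2 a b c d) $$ (3,2) = (T2T1 a b c d * Rmat K g h) $$ (3,2)"
    apply (subst prod_entry[OF carr(1,2)], simp, simp)
    apply (subst prod_entry[OF carr(3,1)], simp, simp)
    apply (simp add: Rmat_eq T1T2_def T2T1_def Tmat_def)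
    apply (simp add: algebra_simps rr r1' r2' r3' r4' r5' r6' cg[of a] cg[of b] cg[of c] cg[of d] ch[of a] ch[of b] ch[of c] ch[of d] cK[of a] cK[of b] cK[of c] cK[of d] sK)?
    done
  have e33: "(Rmat K g h * T1T2 a b c d) $$ (3,3) = (T2T1 a b c d * Rmat K g h) $$ (3,3)"
    apply (subst prod_entry[OF carr(1,2)], simp, simp)
    apply (subst prod_entry[OF carr(3,1)], simp, simp)
    apply (simp add: Rmat_eq T1T2_def T2T1_def Tmat_def)
    apply (simp add: algebra_simps rr r1' r2' r3' r4' r5' r6' cg[of a] cg[of b] cg[of c] cg[of d] ch[of a] ch[of b] ch[of c] ch[of d] cK[of a] cK[of b] cK[of c] cK[of d] sK)?
    done
  show ?thesis
  proof (rule eq_matI)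
    fix i j assume i: "i < dim_row (T2T1 a b c d * Rmat K g h)" and j: "j < dim_col (T2T1 a b c d * Rmat K g h)"
    then have i4: "i < 4" and j4: "j < 4" using carr by auto
    show "(Rmat K g h * T1T2 a b c d) $$ (i, j) = (T2T1 a b c d * Rmat K g h) $$ (i, j)"
      using c4[OF i4] c4[OF j4] e00 e01 e02 e03 e10 e11 e12 e13 e20 e21 e22 e23 e30 e31 e32 e33 by auto
  qed (use carr in auto)
qed

end
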